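(* Let $n=2^t m$ with $t\ge 0$ and $m$ odd, and let $D_n$ be the dihedral group of order $2n$. Then $\mathrm{mixlen}(D_n)\le t+m$.
   Context: For a finite group $G$, a random subproduct is a random element $g_1^{\epsilon_1}\cdots g_k^{\epsilon_k}$ with $g_1,\dots,g_k\in G$ fixed and $\epsilon_1,\dots,\epsilon_k$ independent Bernoulli random variables, $\epsilon_i\sim\mathrm{Ber}(p_i)$, $p_i\in[0,1]$. $\mathrm{mixlen}(G)$ is the minimal number $k$ of factors in a random subproduct that is distributed exactly uniformly on $G$. *)

theory Defs
  imports Complex_Main "HOL-Algebra.Group"
begin

text \<open>Dihedral group of order 2n (n \<ge> 1): elements (a, s) with a \<in> {0..<n} standing for
  r^a s^[s]; r rotation of order n, s reflection, s r s = r^{-1}.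
  (a,s)(b,u) = (a + (if s then -b else b) mod n, s xor u).\<close>
definition dihedral_group :: "nat \<Rightarrow> (int \<times> bool) monoid" where
  "dihedral_group n = \<lparr> carrier = {0..<int n} \<times> UNIV,
     mult = (\<lambda>(a, s) (b, u). ((a + (if s then - b else b)) mod int n, s \<noteq> u)),
     one = (0, False) \<rparr>"

definition subprod :: "('a, 'b) monoid_scheme \<Rightarrow> 'a list \<Rightarrow> bool list \<Rightarrow> 'a" where
  "subprod G gs es = foldr (\<lambda>(g, e) acc. (if e then g else \<one>\<^bsub>G\<^esub>) \<otimes>\<^bsub>G\<^esub> acc) (zip gs es) \<one>\<^bsub>G\<^esub>"

definition subprod_prob :: "('a, 'b) monoid_scheme \<Rightarrow> 'a list \<Rightarrow> real list \<Rightarrow> 'a \<Rightarrow> real" where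
  "subprod_prob G gs ps x =
     (\<Sum>es \<in> {es. length es = length gs}.
        if subprod G gs es = x
        then (\<Prod>i<length gs. if es ! i then ps ! i else 1 - ps ! i) else 0)"

definition uniform_subproduct :: "('a, 'b) monoid_scheme \<Rightarrow> 'a list \<Rightarrow> real list \<Rightarrow> bool" where
  "uniform_subproduct G gs ps \<longleftrightarrow>
     length ps = length gs \<and> set gs \<subseteq> carrier G \<and> (\<forall>p \<in> set ps. 0 \<le> p \<and> p \<le> 1) \<and>
     (\<forall>x \<in> carrier G. subprod_prob G gs ps x = 1 / real (card (carrier G)))"

definition mixlen :: "('a, 'b) monoid_scheme \<Rightarrow> nat" where
  "mixlen G = (LEAST k. \<exists>gs ps. length gs = k \<and> uniform_subproduct G gs ps)"

end

theory Submission
  imports Defs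
begin


lemma dg_carrier: "carrier (dihedral_group n) = {0..<int n} \<times> UNIV"
  by (simp add: dihedral_group_def)
lemma dg_one: "\<one>\<^bsub>dihedral_group n\<^esub> = (0, False)"
  by (simp add: dihedral_group_def)
lemma dg_mult: "(a, s) \<otimes>\<^bsub>dihedral_group n\<^esub> (b, u) = ((a + (if s then - b else b)) mod int n, s \<noteq> u)"
  by (simp add: dihedral_group_def)

lemma subprod_Nil: "subprod G [] es = \<one>\<^bsub>G\<^esub>"
  by (simp add: subprod_def)
lemma subprod_Cons: "subprod G (g # gs) (e # es) = (if e then g else \<one>\<^bsub>G\<^esub>) \<otimes>\<^bsub>G\<^esub> subprod G gs es"
  by (simp add: subprod_def)

lemma subprod_carrier:
  assumes "n > 0" "set gs \<subseteq> carrier (dihedral_group n)" "length es = length gs"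
  shows "subprod (dihedral_group n) gs es \<in> carrier (dihedral_group n)"
  using assms(2,3)
proof (induction gs arbitrary: es)
  case Nil then show ?case using assms(1) by (simp add: subprod_Nil dg_one dg_carrier)
next
  case (Cons g gs)
  then obtain e es' where es: "es = e # es'" by (cases es) auto
  obtain a s where g: "g = (a, s)" by (cases g)
  obtain b u where r: "subprod (dihedral_group n) gs es' = (b, u)" by (cases "subprod (dihedral_group n) gs es'")
  show ?case using assms(1) by (cases e) (auto simp: es subprod_Cons r g dg_one dg_mult dg_carrier)
qed

lemma lists_Suc: "{es :: bool list. length es = Suc k} = Cons True ` {es. length es = k} \<union> Cons False ` {es. length es = k}"
  by (auto simp: length_Suc_conv)

lemma subprod_prob_Cons:
  assumes "length ps = length gs"
  shows "subprod_prob G (g # gs) (p # ps) x =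
     (1 - p) * (\<Sum>es \<in> {es. length es = length gs}. if \<one>\<^bsub>G\<^esub> \<otimes>\<^bsub>G\<^esub> subprod G gs es = x then (\<Prod>i<length gs. if es ! i then ps ! i else 1 - ps ! i) else 0)
   + p * (\<Sum>es \<in> {es. length es = length gs}. if g \<otimes>\<^bsub>G\<^esub> subprod G gs es = x then (\<Prod>i<length gs. if es ! i then ps ! i else 1 - ps ! i) else 0)"
proof -
  let ?S = "{es :: bool list. length es = length gs}"
  let ?f = "\<lambda>es. if subprod G (g # gs) es = x then (\<Prod>i<length (g # gs). if es ! i then (p # ps) ! i else 1 - (p # ps) ! i) else 0"
  have nS: "\<And>i. (p # ps) ! Suc i = ps ! i" by simp
  have fin: "finite ?S" using finite_lists_length_eq[of "UNIV :: bool set"] by simp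
  have "subprod_prob G (g # gs) (p # ps) x = sum ?f (Cons True ` ?S \<union> Cons False ` ?S)"
    unfolding subprod_prob_def by (simp add: lists_Suc)
  also have "\<dots> = sum ?f (Cons True ` ?S) + sum ?f (Cons False ` ?S)"
    by (rule sum.union_disjoint) (use fin in auto)
  also have "sum ?f (Cons True ` ?S) = sum (?f \<circ> Cons True) ?S"
    by (rule sum.reindex) (simp add: inj_on_def)
  also have "sum ?f (Cons False ` ?S) = sum (?f \<circ> Cons False) ?S"
    by (rule sum.reindex) (simp add: inj_on_def)
  also have "sum (?f \<circ> Cons True) ?S = p * (\<Sum>es \<in> ?S. if g \<otimes>\<^bsub>G\<^esub> subprod G gs es = x then (\<Prod>i<length gs. if es ! i then ps ! i else 1 - ps ! i) else 0)"
    unfolding sum_distrib_left by (intro sum.cong refl) (simp add: prod.lessThan_Suc_shift subprod_Cons del: prod.lessThan_Suc, simp only: nS, simp)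
  also have "sum (?f \<circ> Cons False) ?S = (1 - p) * (\<Sum>es \<in> ?S. if \<one>\<^bsub>G\<^esub> \<otimes>\<^bsub>G\<^esub> subprod G gs es = x then (\<Prod>i<length gs. if es ! i then ps ! i else 1 - ps ! i) else 0)"
    unfolding sum_distrib_left by (intro sum.cong refl) (simp add: prod.lessThan_Suc_shift subprod_Cons del: prod.lessThan_Suc, simp only: nS, simp)
  finally show ?thesis by simp
qed


lemma modeq_rot:
  fixes b c y N :: int
  assumes "0 \<le> y" "y < N" "0 \<le> c" "c < N"
  shows "(b + y) mod N = c \<longleftrightarrow> y = (c - b) mod N"
proof
  assume h: "(b + y) mod N = c"
  have "(c - b) mod N = ((b + y) mod N - b) mod N" using h by simp
  also have "\<dots> = (b + y - b) mod N" by (simp add: mod_diff_left_eq)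
  also have "\<dots> = y" using assms by simp
  finally show "y = (c - b) mod N" by simp
next
  assume h: "y = (c - b) mod N"
  have "(b + y) mod N = (b + (c - b)) mod N" unfolding h by (simp add: mod_add_right_eq)
  also have "\<dots> = c" using assms by simp
  finally show "(b + y) mod N = c" .
qed

lemma modeq_ref:
  fixes b c y N :: int
  assumes "0 \<le> y" "y < N" "0 \<le> c" "c < N"
  shows "(b - y) mod N = c \<longleftrightarrow> y = (b - c) mod N"
proof
  assume h: "(b - y) mod N = c"
  have "(b - c) mod N = (b - (b - y) mod N) mod N" using h by simp
  also have "\<dots> = (b - (b - y)) mod N" by (simp add: mod_diff_right_eq)
  also have "\<dots> = y" using assms by simp
  finally show "y = (b - c) mod N" by simp
next
  assume h: "y = (b - c) mod N"
  have "(b - y) mod N = (b - (b - c)) mod N" unfolding h by (simp add: mod_diff_right_eq)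
  also have "\<dots> = c" using assms by simp
  finally show "(b - y) mod N = c" .
qed

lemma sp_gen:
  assumes "n > 0" "set gs \<subseteq> carrier (dihedral_group n)" "length ps = length gs"
    and g: "\<And>y. y \<in> carrier (dihedral_group n) \<Longrightarrow> g \<otimes>\<^bsub>dihedral_group n\<^esub> y = x \<longleftrightarrow> y = x'"
    and x: "x \<in> carrier (dihedral_group n)"
  shows "subprod_prob (dihedral_group n) (g # gs) (p # ps) x =
     (1 - p) * subprod_prob (dihedral_group n) gs ps x + p * subprod_prob (dihedral_group n) gs ps x'"
proof -
  let ?D = "dihedral_group n"
  have one: "\<one>\<^bsub>?D\<^esub> \<otimes>\<^bsub>?D\<^esub> y = y" if "y \<in> carrier ?D" for y
    using that by (cases y) (auto simp: dg_one dg_mult dg_carrier)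
  have c: "\<And>es. es \<in> {es. length es = length gs} \<Longrightarrow> subprod ?D gs es \<in> carrier ?D"
    using subprod_carrier[OF assms(1,2)] by simp
  show ?thesis
    apply (subst subprod_prob_Cons[OF assms(3)])
    unfolding subprod_prob_def
    apply (intro arg_cong2[where f="(+)"] arg_cong2[where f="(*)"] refl sum.cong)
    using c by (auto simp: one g)
qed

lemma sp_rot:
  assumes "n > 0" "set gs \<subseteq> carrier (dihedral_group n)" "length ps = length gs"
    and "0 \<le> b" "b < int n" "0 \<le> c" "c < int n"
  shows "subprod_prob (dihedral_group n) ((b, False) # gs) (p # ps) (c, e) =
     (1 - p) * subprod_prob (dihedral_group n) gs ps (c, e) + p * subprod_prob (dihedral_group n) gs ps ((c - b) mod int n, e)"
proof (rule sp_gen[OF assms(1-3)])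
  fix y assume "y \<in> carrier (dihedral_group n)"
  then show "(b, False) \<otimes>\<^bsub>dihedral_group n\<^esub> y = (c, e) \<longleftrightarrow> y = ((c - b) mod int n, e)"
    using modeq_rot[of "fst y" "int n" c b] assms by (cases y) (auto simp: dg_mult dg_carrier)
qed (use assms in \<open>auto simp: dg_carrier\<close>)

lemma sp_ref:
  assumes "n > 0" "set gs \<subseteq> carrier (dihedral_group n)" "length ps = length gs"
    and "0 \<le> b" "b < int n" "0 \<le> c" "c < int n"
  shows "subprod_prob (dihedral_group n) ((b, True) # gs) (p # ps) (c, e) =
     (1 - p) * subprod_prob (dihedral_group n) gs ps (c, e) + p * subprod_prob (dihedral_group n) gs ps ((b - c) mod int n, \<not> e)"
proof (rule sp_gen[OF assms(1-3)])
  fix y assume "y \<in> carrier (dihedral_group n)"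
  then show "(b, True) \<otimes>\<^bsub>dihedral_group n\<^esub> y = (c, e) \<longleftrightarrow> y = ((b - c) mod int n, \<not> e)"
    using modeq_ref[of "fst y" "int n" c b] assms by (cases y) (auto simp: dg_mult dg_carrier)
qed (use assms in \<open>auto simp: dg_carrier\<close>)

lemma sp_Nil: "subprod_prob (dihedral_group n) [] [] x = (if x = (0, False) then 1 else 0)"
proof -
  have "{es :: bool list. length es = 0} = {[]}" by auto
  then show ?thesis by (simp add: subprod_prob_def subprod_Nil dg_one)
qed


definition FT :: "nat \<Rightarrow> (int \<times> bool) list \<Rightarrow> real list \<Rightarrow> bool \<Rightarrow> complex \<Rightarrow> complex" where
  "FT n gs ps e w = (\<Sum>c\<in>{0..<int n}. of_real (subprod_prob (dihedral_group n) gs ps (c, e)) * w powi c)"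

lemma root_nz: "n > 0 \<Longrightarrow> (w::complex) ^ n = 1 \<Longrightarrow> w \<noteq> 0"
  by (cases "w = 0") (auto simp: power_0_left)

lemma root_norm: assumes "n > 0" "(w::complex) ^ n = 1" shows "norm w = 1"
proof -
  have "norm w ^ n = 1" using assms by (metis norm_one norm_power)
  then show ?thesis using assms(1) power_eq_imp_eq_base[of "norm w" n 1] by simp
qed

lemma root_cnj: assumes "n > 0" "(w::complex) ^ n = 1" shows "cnj w = inverse w"
proof -
  have "w * cnj w = 1" using root_norm[OF assms] complex_norm_square[of w] by simp
  then show ?thesis using root_nz[OF assms] by (simp add: field_simps)
qed

lemma pw_mod:
  assumes "n > 0" "(w::complex) ^ n = 1"
  shows "w powi (c mod int n) = w powi c"
proof -
  have nz: "w \<noteq> 0" using root_nz[OF assms] .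
  have "w powi c = w powi (c mod int n + int n * (c div int n))" by simp
  also have "\<dots> = w powi (c mod int n) * w powi (int n * (c div int n))"
    using nz by (subst power_int_add[symmetric]) auto
  also have "w powi (int n * (c div int n)) = 1"
    unfolding power_int_mult using assms by simp
  finally show ?thesis by simp
qed

lemma pw_cnj:
  assumes "n > 0" "(w::complex) ^ n = 1"
  shows "cnj (w powi c) = w powi (- c)"
  using root_cnj[OF assms] by (simp add: power_int_minus power_int_inverse)

lemma reidx_rot:
  assumes "n > 0" "(w::complex) ^ n = 1"
  shows "(\<Sum>c\<in>{0..<int n}. h ((c - b) mod int n) * w powi c) = w powi b * (\<Sum>c\<in>{0..<int n}. h c * w powi c)"
proof -
  have nz: "w \<noteq> 0" using root_nz[OF assms] .
  have "w powi b * (\<Sum>c\<in>{0..<int n}. h c * w powi c) = (\<Sum>c\<in>{0..<int n}. h c * w powi ((c + b) mod int n))"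
    unfolding sum_distrib_left pw_mod[OF assms] using nz by (intro sum.cong refl) (simp add: power_int_add)
  also have "\<dots> = (\<Sum>c\<in>{0..<int n}. h ((c - b) mod int n) * w powi c)"
  proof (rule sum.reindex_bij_witness[where i = "\<lambda>c. (c - b) mod int n" and j = "\<lambda>c. (c + b) mod int n"])
    fix a :: int assume a: "a \<in> {0..<int n}"
    show "((a + b) mod int n - b) mod int n = a" using a by (simp add: mod_diff_left_eq)
    show "(a + b) mod int n \<in> {0..<int n}" using assms by simp
    show "h (((a + b) mod int n - b) mod int n) * w powi ((a + b) mod int n) = h a * w powi ((a + b) mod int n)"
      using a by (simp add: mod_diff_left_eq)
  next
    fix a :: int assume a: "a \<in> {0..<int n}"
    show "((a - b) mod int n + b) mod int n = a" using a by (simp add: mod_add_left_eq)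
    show "(a - b) mod int n \<in> {0..<int n}" using assms by simp
  qed
  finally show ?thesis by simp
qed

lemma reidx_ref:
  assumes "n > 0" "(w::complex) ^ n = 1"
  shows "(\<Sum>c\<in>{0..<int n}. of_real (h ((b - c) mod int n)) * w powi c) = w powi b * cnj (\<Sum>c\<in>{0..<int n}. of_real (h c) * w powi c)"
proof -
  have nz: "w \<noteq> 0" using root_nz[OF assms] .
  have "w powi b * cnj (\<Sum>c\<in>{0..<int n}. of_real (h c) * w powi c) = (\<Sum>c\<in>{0..<int n}. of_real (h c) * w powi ((b - c) mod int n))"
    unfolding sum_distrib_left cnj_sum pw_mod[OF assms] using nz
    by (intro sum.cong refl) (simp add: pw_cnj[OF assms] power_int_diff power_int_minus field_simps del: complex_cnj_power_int)
  also have "\<dots> = (\<Sum>c\<in>{0..<int n}. of_real (h ((b - c) mod int n)) * w powi c)"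
  proof (rule sum.reindex_bij_witness[where i = "\<lambda>c. (b - c) mod int n" and j = "\<lambda>c. (b - c) mod int n"])
    fix a :: int assume a: "a \<in> {0..<int n}"
    show "(b - (b - a) mod int n) mod int n = a" using a by (simp add: mod_diff_right_eq)
    show "(b - a) mod int n \<in> {0..<int n}" using assms by simp
    show "of_real (h ((b - (b - a) mod int n) mod int n)) * w powi ((b - a) mod int n) = of_real (h a) * w powi ((b - a) mod int n)"
      using a by (simp add: mod_diff_right_eq)
  next
    fix a :: int assume a: "a \<in> {0..<int n}"
    show "(b - (b - a) mod int n) mod int n = a" using a by (simp add: mod_diff_right_eq)
    show "(b - a) mod int n \<in> {0..<int n}" using assms by simp
  qed
  finally show ?thesis by simp
qed


lemma FT_rot:
  assumes "n > 0" "set gs \<subseteq> carrier (dihedral_group n)" "length ps = length gs"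
    and "0 \<le> b" "b < int n" "(w::complex) ^ n = 1"
  shows "FT n ((b, False) # gs) (p # ps) e w = (1 - of_real p + of_real p * w powi b) * FT n gs ps e w"
proof -
  let ?f = "\<lambda>c. subprod_prob (dihedral_group n) gs ps (c, e)"
  have "FT n ((b, False) # gs) (p # ps) e w =
     (\<Sum>c\<in>{0..<int n}. (1 - of_real p) * (of_real (?f c) * w powi c) + of_real p * (of_real (?f ((c - b) mod int n)) * w powi c))"
    unfolding FT_def using assms by (intro sum.cong refl) (simp add: sp_rot algebra_simps)
  also have "\<dots> = (1 - of_real p) * FT n gs ps e w + of_real p * (\<Sum>c\<in>{0..<int n}. of_real (?f ((c - b) mod int n)) * w powi c)"
    unfolding FT_def by (simp add: sum.distrib sum_distrib_left)
  also have "(\<Sum>c\<in>{0..<int n}. of_real (?f ((c - b) mod int n)) * w powi c) = w powi b * FT n gs ps e w"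
    unfolding FT_def by (rule reidx_rot[OF assms(1,6), where h = "\<lambda>c. of_real (?f c)"])
  finally show ?thesis by (simp add: algebra_simps)
qed

lemma FT_ref:
  assumes "n > 0" "set gs \<subseteq> carrier (dihedral_group n)" "length ps = length gs"
    and "0 \<le> b" "b < int n" "(w::complex) ^ n = 1"
  shows "FT n ((b, True) # gs) (p # ps) e w = (1 - of_real p) * FT n gs ps e w + of_real p * w powi b * cnj (FT n gs ps (\<not> e) w)"
proof -
  let ?f = "\<lambda>c. subprod_prob (dihedral_group n) gs ps (c, e)"
  let ?g = "\<lambda>c. subprod_prob (dihedral_group n) gs ps (c, \<not> e)"
  have "FT n ((b, True) # gs) (p # ps) e w =
     (\<Sum>c\<in>{0..<int n}. (1 - of_real p) * (of_real (?f c) * w powi c) + of_real p * (of_real (?g ((b - c) mod int n)) * w powi c))"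
    unfolding FT_def using assms by (intro sum.cong refl) (simp add: sp_ref algebra_simps)
  also have "\<dots> = (1 - of_real p) * FT n gs ps e w + of_real p * (\<Sum>c\<in>{0..<int n}. of_real (?g ((b - c) mod int n)) * w powi c)"
    unfolding FT_def by (simp add: sum.distrib sum_distrib_left)
  also have "(\<Sum>c\<in>{0..<int n}. of_real (?g ((b - c) mod int n)) * w powi c) = w powi b * cnj (FT n gs ps (\<not> e) w)"
    unfolding FT_def by (rule reidx_ref[OF assms(1,6)])
  finally show ?thesis by (simp add: algebra_simps)
qed

lemma FT_Nil: "n > 0 \<Longrightarrow> FT n [] [] e w = (if e then 0 else 1)"
proof -
  assume n: "n > 0"
  have "FT n [] [] e w = (\<Sum>c\<in>{0..<int n}. if c = 0 \<and> \<not> e then 1 else 0)"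
    unfolding FT_def sp_Nil by (intro sum.cong refl) auto
  also have "\<dots> = (if e then 0 else 1)" using n by (simp add: sum.delta)
  finally show ?thesis .
qed


definition zeta :: "nat \<Rightarrow> complex" where "zeta n = cis (2 * pi / real n)"

lemma zeta_pow: "zeta n ^ a = cis (2 * pi * real a / real n)"
  by (simp add: zeta_def DeMoivre mult_ac)

lemma zeta_n: "n > 0 \<Longrightarrow> zeta n ^ n = 1"
  by (simp add: zeta_pow complex_eq_iff)

lemma zeta_pow_eq_1: assumes "n > 0" shows "zeta n ^ a = 1 \<longleftrightarrow> n dvd a"
proof
  assume h: "zeta n ^ a = 1"
  have "zeta n ^ a = zeta n ^ (a mod n) * (zeta n ^ n) ^ (a div n)"
    by (metis div_mult_mod_eq power_add power_mult mult.commute add.commute)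
  then have "zeta n ^ (a mod n) = 1" using h zeta_n[OF assms] by simp
  then have eq: "(\<lambda>k. cis (2 * pi * real k / real n)) (a mod n) = (\<lambda>k. cis (2 * pi * real k / real n)) 0"
    by (simp add: zeta_pow)
  have inj: "inj_on (\<lambda>k. cis (2 * pi * real k / real n)) {..<n}"
    using bij_betw_roots_unity[OF assms] by (simp add: bij_betw_def)
  have "a mod n = 0" using inj_onD[OF inj eq] assms by simp
  then show "n dvd a" by auto
next
  assume "n dvd a"
  then obtain q where "a = n * q" by auto
  then show "zeta n ^ a = 1" using zeta_n[OF assms] by (simp add: power_mult)
qed

lemma geo_root_sum:
  assumes "n > 0" "(q::complex) ^ n = 1" "q \<noteq> 1"
  shows "(\<Sum>k<n. q ^ k) = 0"
  using assms by (simp add: geometric_sum)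

lemma char_sum:
  assumes "n > 0" "x \<in> {0..<int n}" "c \<in> {0..<int n}"
  shows "(\<Sum>k<n. (zeta n powi (c - x)) ^ k) = (if c = x then of_nat n else 0)"
proof (cases "c = x")
  case True then show ?thesis by simp
next
  case False
  let ?q = "zeta n powi (c - x)"
  have z: "zeta n ^ n = 1" using zeta_n[OF assms(1)] .
  have "?q = zeta n powi ((c - x) mod int n)" using pw_mod[OF assms(1) z] by simp
  also have "\<dots> = zeta n ^ nat ((c - x) mod int n)"
    using assms by (simp add: power_int_nonneg_exp)
  finally have q: "?q = zeta n ^ nat ((c - x) mod int n)" .
  have "(c - x) mod int n \<noteq> 0"
  proof
    assume "(c - x) mod int n = 0"
    then have "int n dvd (c - x)" by auto
    then obtain r where r: "c - x = int n * r" by auto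
    have "\<bar>c - x\<bar> < int n" using assms by auto
    then have "int n * \<bar>r\<bar> < int n * 1" using r by (simp add: abs_mult)
    then have "\<bar>r\<bar> < 1" using assms(1) by (simp add: mult_less_cancel_left)
    then have "r = 0" by simp
    then show False using r False by simp
  qed
  moreover have "0 \<le> (c - x) mod int n" "(c - x) mod int n < int n" using assms by auto
  ultimately have "\<not> n dvd nat ((c - x) mod int n)"
    by (metis dvd_imp_le nat_less_iff nat_eq_iff2 not_le zero_less_nat_eq order_le_less)
  then have "?q \<noteq> 1" using q zeta_pow_eq_1[OF assms(1)] by simp
  moreover have "?q ^ n = 1" using q z by (metis power_mult power_mult_distrib mult.commute power_one)
  ultimately show ?thesis using geo_root_sum[OF assms(1)] False by simp
qed


lemma inversion:
  fixes f :: "int \<Rightarrow> real"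
  assumes n: "n > 0" and hk: "\<And>k. k \<in> {1..<n} \<Longrightarrow> (\<Sum>c\<in>{0..<int n}. of_real (f c) * (zeta n ^ k) powi c) = 0"
    and x: "x \<in> {0..<int n}"
  shows "f x = (\<Sum>c\<in>{0..<int n}. f c) / real n"
proof -
  let ?I = "{0..<int n}"
  let ?g = "\<lambda>k. (zeta n ^ k) powi (- x) * (\<Sum>c\<in>?I. of_real (f c) * (zeta n ^ k) powi c)"
  have nz: "zeta n \<noteq> 0" by (simp add: zeta_def)
  have "(\<Sum>k<n. ?g k) = ?g 0 + (\<Sum>k\<in>{..<n} - {0}. ?g k)"
    using n by (subst sum.remove[of _ 0]) auto
  also have "(\<Sum>k\<in>{..<n} - {0}. ?g k) = 0"
    using hk by (intro sum.neutral) auto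
  finally have S1: "(\<Sum>k<n. ?g k) = (\<Sum>c\<in>?I. of_real (f c))" by simp
  have "(\<Sum>k<n. ?g k) = (\<Sum>k<n. \<Sum>c\<in>?I. of_real (f c) * (zeta n powi (c - x)) ^ k)"
  proof (intro sum.cong refl)
    fix k assume "k \<in> {..<n}"
    have e: "(zeta n ^ k) powi (- x) * (zeta n ^ k) powi c = (zeta n powi (c - x)) ^ k" for c
    proof -
      have "(zeta n ^ k) powi (- x) * (zeta n ^ k) powi c = (zeta n ^ k) powi (- x + c)"
        using nz by (subst power_int_add) auto
      also have "\<dots> = (zeta n powi (c - x)) ^ k"
        by (simp add: power_int_power power_int_power' mult.commute)
      finally show ?thesis .
    qed
    show "?g k = (\<Sum>c\<in>?I. of_real (f c) * (zeta n powi (c - x)) ^ k)"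
      unfolding sum_distrib_left by (intro sum.cong refl) (metis e mult.left_commute)
  qed
  also have "\<dots> = (\<Sum>c\<in>?I. of_real (f c) * (\<Sum>k<n. (zeta n powi (c - x)) ^ k))"
    by (subst sum.swap) (simp add: sum_distrib_left)
  also have "\<dots> = (\<Sum>c\<in>?I. if c = x then of_real (f c) * of_nat n else 0)"
    using char_sum[OF n x] by (intro sum.cong refl) auto
  also have "\<dots> = of_real (f x) * of_nat n" using x by (simp add: sum.delta)
  finally have "of_real (f x) * of_nat n = (\<Sum>c\<in>?I. of_real (f c) :: complex)" using S1 by simp
  then have "f x * real n = (\<Sum>c\<in>?I. f c)"
    by (metis (mono_tags) of_real_eq_iff of_real_mult of_real_of_nat_eq of_real_sum)
  then show ?thesis using n by (simp add: field_simps)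
qed


lemma exists_neg_re:
  assumes "m > 0" "(q::complex) ^ m = 1" "q \<noteq> 1"
  shows "\<exists>c<m. Re (q ^ c) \<le> 0"
proof (rule ccontr)
  assume "\<not> ?thesis"
  then have pos: "\<And>c. c \<in> {..<m} \<Longrightarrow> 0 < Re (q ^ c)" by force
  have "(\<Sum>c<m. q ^ c) = 0" using geo_root_sum[OF assms] .
  then have "(\<Sum>c<m. Re (q ^ c)) = 0" by (metis Re_sum zero_complex.sel(1))
  moreover have "0 < (\<Sum>c<m. Re (q ^ c))" using assms(1) pos by (intro sum_pos) auto
  ultimately show False by simp
qed

definition wq :: "nat \<Rightarrow> nat \<Rightarrow> nat \<Rightarrow> complex" where "wq n t i = zeta n ^ (2 ^ t * i)"
definition cc :: "nat \<Rightarrow> nat \<Rightarrow> nat \<Rightarrow> nat \<Rightarrow> nat" where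
  "cc n t m i = (SOME c. c < m \<and> Re (wq n t i ^ c) \<le> 0)"
definition pp :: "nat \<Rightarrow> nat \<Rightarrow> nat \<Rightarrow> nat \<Rightarrow> real" where
  "pp n t m i = - Re (wq n t i ^ cc n t m i) / (1 - Re (wq n t i ^ cc n t m i))"
fun bb :: "nat \<Rightarrow> nat \<Rightarrow> nat \<Rightarrow> nat \<Rightarrow> nat" where
  "bb n t m 0 = 0"
| "bb n t m (Suc i) = bb n t m i + 2 * cc n t m (Suc i)"
fun PL :: "nat \<Rightarrow> nat \<Rightarrow> nat \<Rightarrow> nat \<Rightarrow> (int \<times> bool) list" where
  "PL n t m 0 = [(0, True)]"
| "PL n t m (Suc i) = (int (bb n t m (Suc i)) mod int n, True) # (int (cc n t m (Suc i)), False) # PL n t m i"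
fun PS :: "nat \<Rightarrow> nat \<Rightarrow> nat \<Rightarrow> nat \<Rightarrow> real list" where
  "PS n t m 0 = [1/2]"
| "PS n t m (Suc i) = 1/2 # pp n t m (Suc i) # PS n t m i"
definition TL :: "nat \<Rightarrow> nat \<Rightarrow> (int \<times> bool) list" where
  "TL m t = map (\<lambda>j. (int (m * 2 ^ j), False)) [0..<t]"
definition TP :: "nat \<Rightarrow> real list" where "TP t = replicate t (1/2)"

context
  fixes n t m :: nat
  assumes nd: "n = 2 ^ t * m" and mo: "odd m"
begin

lemma m_pos: "m > 0" using mo by (cases m) auto
lemma n_pos: "n > 0" using nd m_pos by simp

lemma wq_m: "wq n t i ^ m = 1"
proof -
  have "wq n t i ^ m = (zeta n ^ n) ^ i" unfolding wq_def nd by (simp add: power_mult[symmetric] mult_ac)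
  then show ?thesis using zeta_n[OF n_pos] by simp
qed

lemma wq_ne1: assumes "1 \<le> i" "i < m" shows "wq n t i \<noteq> 1"
proof
  assume "wq n t i = 1"
  then have "n dvd 2 ^ t * i" unfolding wq_def using zeta_pow_eq_1[OF n_pos] by simp
  then have "m dvd i" unfolding nd by simp
  then show False using assms by (auto dest: dvd_imp_le)
qed

lemma cc_prop: assumes "1 \<le> i" "i < m" shows "cc n t m i < m \<and> Re (wq n t i ^ cc n t m i) \<le> 0"
proof -
  have "\<exists>c. c < m \<and> Re (wq n t i ^ c) \<le> 0"
    using exists_neg_re[OF m_pos wq_m wq_ne1[OF assms]] by blast
  then show ?thesis unfolding cc_def by (rule someI_ex)
qed

lemma pp_range: assumes "1 \<le> i" "i < m" shows "0 \<le> pp n t m i \<and> pp n t m i \<le> 1"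
proof -
  have x: "Re (wq n t i ^ cc n t m i) \<le> 0" using cc_prop[OF assms] by simp
  then show ?thesis unfolding pp_def by (auto simp: field_simps)
qed

lemma PL_valid:
  assumes "i < m"
  shows "set (PL n t m i) \<subseteq> carrier (dihedral_group n) \<and> length (PS n t m i) = length (PL n t m i)
    \<and> (\<forall>p\<in>set (PS n t m i). 0 \<le> p \<and> p \<le> 1) \<and> length (PL n t m i) = 2 * i + 1"
  using assms
proof (induction i)
  case 0 then show ?case using n_pos by (simp add: dg_carrier)
next
  case (Suc i)
  have "cc n t m (Suc i) < m" using cc_prop[of "Suc i"] Suc.prems by simp
  moreover have "m \<le> n" unfolding nd by simp
  ultimately have "int (cc n t m (Suc i)) < int n" by linarith
  then show ?case using Suc pp_range[of "Suc i"] n_pos by (auto simp: dg_carrier)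
qed

end


lemma kill_alg:
  fixes u :: complex and p :: real
  assumes "norm u = 1" "Re u \<le> 0" "p = - Re u / (1 - Re u)"
  shows "(1 - of_real p + of_real p * u) + u ^ 2 * cnj (1 - of_real p + of_real p * u) = 0"
proof -
  define x where "x = Re u"
  have uc: "u * cnj u = 1" using assms(1) complex_norm_square[of u] by simp
  have sq: "1 + u ^ 2 = 2 * of_real x * u"
  proof -
    have "2 * of_real x * u = (u + cnj u) * u" by (simp add: x_def complex_add_cnj)
    also have "\<dots> = u ^ 2 + u * cnj u" by (simp add: algebra_simps power2_eq_square)
    finally show ?thesis using uc by simp
  qed
  have px: "(1 - p) * x + p = 0" using assms(2,3) unfolding x_def by (simp add: field_simps)
  have "(1 - of_real p + of_real p * u) + u ^ 2 * cnj (1 - of_real p + of_real p * u)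
      = (1 - of_real p) * (1 + u ^ 2) + of_real p * u + of_real p * u * (u * cnj u)"
    by (simp add: algebra_simps power2_eq_square)
  also have "\<dots> = 2 * u * of_real ((1 - p) * x + p)" unfolding sq uc by (simp add: algebra_simps)
  also have "\<dots> = 0" using px by simp
  finally show ?thesis .
qed

context
  fixes n t m :: nat
  assumes nd: "n = 2 ^ t * m" and mo: "odd m"
begin

lemma ref_half:
  assumes "set L \<subseteq> carrier (dihedral_group n)" "length P = length L" "0 \<le> b" "b < int n" "w ^ n = 1"
  shows "FT n ((b, True) # L) (1/2 # P) True w = w powi b * cnj (FT n ((b, True) # L) (1/2 # P) False w)"
proof -
  have np: "n > 0" using n_pos[OF nd mo] .
  have u: "w powi b * cnj (w powi b) = 1"
    using root_nz[OF np assms(5)] by (simp add: pw_cnj[OF np assms(5)] power_int_minus field_simps del: complex_cnj_power_int)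
  have u2: "w powi b * cnj w powi b = 1" using u by simp
  show ?thesis
    unfolding FT_ref[OF np assms] by (simp add: algebra_simps u2)
qed


lemma PL_el:
  assumes "Suc i < m"
  shows "set (PL n t m i) \<subseteq> carrier (dihedral_group n)" "length (PS n t m i) = length (PL n t m i)"
    "set ((int (cc n t m (Suc i)), False) # PL n t m i) \<subseteq> carrier (dihedral_group n)"
    "length (pp n t m (Suc i) # PS n t m i) = length ((int (cc n t m (Suc i)), False) # PL n t m i)"
    "0 \<le> int (cc n t m (Suc i))" "int (cc n t m (Suc i)) < int n"
    "0 \<le> int (bb n t m (Suc i)) mod int n" "int (bb n t m (Suc i)) mod int n < int n"
proof -
  have np: "n > 0" using n_pos[OF nd mo] .
  have v: "set (PL n t m (Suc i)) \<subseteq> carrier (dihedral_group n) \<and> length (PS n t m (Suc i)) = length (PL n t m (Suc i))"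
    using PL_valid[OF nd mo assms] by simp
  then show "set (PL n t m i) \<subseteq> carrier (dihedral_group n)" "length (PS n t m i) = length (PL n t m i)"
    "set ((int (cc n t m (Suc i)), False) # PL n t m i) \<subseteq> carrier (dihedral_group n)"
    "length (pp n t m (Suc i) # PS n t m i) = length ((int (cc n t m (Suc i)), False) # PL n t m i)"
    "0 \<le> int (cc n t m (Suc i))" "int (cc n t m (Suc i)) < int n"
    by (auto simp: dg_carrier)
  show "0 \<le> int (bb n t m (Suc i)) mod int n" "int (bb n t m (Suc i)) mod int n < int n" using np by auto
qed

lemma PL_inv:
  assumes "i < m" "w ^ n = 1"
  shows "FT n (PL n t m i) (PS n t m i) True w = w powi int (bb n t m i) * cnj (FT n (PL n t m i) (PS n t m i) False w)"
proof (cases i)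
  case 0
  have np: "n > 0" using n_pos[OF nd mo] .
  show ?thesis using ref_half[of "[]" "[]" 0 w] np assms(2) by (simp add: 0)
next
  case (Suc j)
  have np: "n > 0" using n_pos[OF nd mo] .
  note e = PL_el[of j, unfolded Suc[symmetric], OF assms(1)]
  have "FT n (PL n t m i) (PS n t m i) True w = w powi (int (bb n t m i) mod int n) * cnj (FT n (PL n t m i) (PS n t m i) False w)"
    unfolding Suc PL.simps PS.simps using ref_half[OF e(3,4) e(7,8) assms(2)] Suc by simp
  then show ?thesis using pw_mod[OF np assms(2)] by simp
qed

lemma PL_one:
  assumes "i < m"
  shows "FT n (PL n t m i) (PS n t m i) e 1 = 1/2"
  using assms
proof (induction i arbitrary: e)
  case 0
  have np: "n > 0" using n_pos[OF nd mo] .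
  show ?case using FT_ref[where n=n and gs="[]" and ps="[]" and b=0 and w=1 and e=e and p="1/2"] np by (simp add: FT_Nil dg_carrier)
next
  case (Suc i)
  have np: "n > 0" using n_pos[OF nd mo] .
  note e = PL_el[OF Suc.prems]
  have r: "FT n ((int (cc n t m (Suc i)), False) # PL n t m i) (pp n t m (Suc i) # PS n t m i) e' 1 = 1/2" for e'
    using FT_rot[OF np e(1,2) e(5,6), where w=1] Suc by simp
  show ?case unfolding PL.simps PS.simps
    using FT_ref[OF np e(3,4) e(7,8), where w=1] r by simp
qed

lemma PL_kill:
  assumes "Suc i \<le> j" "j < m" "w ^ n = 1"
    and re: "Re (w ^ cc n t m (Suc i)) = Re (wq n t (Suc i) ^ cc n t m (Suc i))"
  shows "FT n (PL n t m j) (PS n t m j) e w = 0"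
  using assms(1,2)
proof (induction j arbitrary: e)
  case 0 then show ?case by simp
next
  case (Suc j)
  have np: "n > 0" using n_pos[OF nd mo] .
  note el = PL_el[OF Suc.prems(2)]
  show ?case
  proof (cases "Suc i = Suc j")
    case False
    then have z: "FT n (PL n t m j) (PS n t m j) e' w = 0" for e' using Suc by simp
    have r: "FT n ((int (cc n t m (Suc j)), False) # PL n t m j) (pp n t m (Suc j) # PS n t m j) e' w = 0" for e'
      using FT_rot[OF np el(1,2) el(5,6) assms(3)] z by simp
    show ?thesis unfolding PL.simps PS.simps
      using FT_ref[OF np el(3,4) el(7,8) assms(3)] r by simp
  next
    case True
    then have ij: "i = j" by simp
    let ?c = "cc n t m (Suc i)" and ?p = "pp n t m (Suc i)"
    let ?A = "FT n (PL n t m i) (PS n t m i) False w"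
    let ?u = "w ^ ?c"
    let ?z = "1 - of_real ?p + of_real ?p * ?u"
    let ?L1 = "(int ?c, False) # PL n t m i" and ?P1 = "?p # PS n t m i"
    let ?b = "int (bb n t m (Suc i)) mod int n"
    have wn: "norm w = 1" using root_norm[OF np assms(3)] .
    have nz: "w \<noteq> 0" using root_nz[OF np assms(3)] .
    have Binv: "FT n (PL n t m i) (PS n t m i) True w = w powi int (bb n t m i) * cnj ?A"
      using PL_inv[of i w] Suc.prems assms(3) by simp
    have A1: "FT n ?L1 ?P1 False w = ?z * ?A"
      using FT_rot[OF np el(1,2) el(5,6) assms(3)] ij by simp
    have B1: "FT n ?L1 ?P1 True w = ?z * (w powi int (bb n t m i) * cnj ?A)"
      using FT_rot[OF np el(1,2) el(5,6) assms(3)] ij Binv by simp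
    have wb: "w powi ?b = w powi int (bb n t m i) * ?u ^ 2"
    proof -
      have "w powi ?b = w powi (int (bb n t m i) + int (2 * ?c))" using pw_mod[OF np assms(3)] by simp
      also have "\<dots> = w powi int (bb n t m i) * w powi int (2 * ?c)" using nz
        by (simp add: power_int_add)
      also have "w powi int (2 * ?c) = ?u ^ 2"
        by (metis power_int_of_nat power_mult mult.commute)
      finally show ?thesis .
    qed
    have wc: "w * cnj w = 1" using wn complex_norm_square[of w] by simp
    have cb: "w powi int (bb n t m i) * cnj (w powi int (bb n t m i)) = 1"
      using wc by (simp add: power_mult_distrib[symmetric])
    have un: "norm ?u = 1" using wn by (simp add: norm_power)
    have ure: "Re ?u \<le> 0" "?p = - Re ?u / (1 - Re ?u)"
      using cc_prop[OF nd mo, of "Suc i"] Suc.prems re ij unfolding pp_def by auto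
    have A2: "FT n (PL n t m (Suc i)) (PS n t m (Suc i)) False w = 0"
    proof -
      have "FT n (PL n t m (Suc i)) (PS n t m (Suc i)) False w
          = (1 - of_real (1/2)) * (?z * ?A) + of_real (1/2) * (w powi int (bb n t m i) * ?u ^ 2) * cnj (?z * (w powi int (bb n t m i) * cnj ?A))"
        unfolding PL.simps PS.simps using FT_ref[OF np el(3,4) el(7,8) assms(3), where p="1/2" and e=False] A1 B1 wb ij by simp
      also have "\<dots> = of_real (1/2) * ?A * (?z + ?u ^ 2 * cnj ?z * (w powi int (bb n t m i) * cnj (w powi int (bb n t m i))))"
        by (simp add: algebra_simps)
      also have "\<dots> = of_real (1/2) * ?A * (?z + ?u ^ 2 * cnj ?z)" using cb by simp
      also have "?z + ?u ^ 2 * cnj ?z = 0" using kill_alg[OF un ure] by simp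
      finally show ?thesis by simp
    qed
    have B2: "FT n (PL n t m (Suc i)) (PS n t m (Suc i)) True w = 0"
      using PL_inv[of "Suc i" w] Suc.prems assms(3) A2 ij by simp
    show ?thesis using A2 B2 ij by (cases e) auto
  qed
qed


lemma rep_app: "replicate (Suc k) x @ P = replicate k x @ (x # P)"
  by (induct k) auto

lemma TL_FT:
  assumes "t' \<le> t" "set L \<subseteq> carrier (dihedral_group n)" "length P = length L" "w ^ n = 1"
  shows "set (TL m t' @ L) \<subseteq> carrier (dihedral_group n) \<and> length (TP t' @ P) = length (TL m t' @ L) \<and>
    FT n (TL m t' @ L) (TP t' @ P) e w = (\<Prod>j<t'. (1 - of_real (1/2) + of_real (1/2) * w ^ (m * 2 ^ j))) * FT n L P e w"
  using assms(1-3)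
proof (induction t' arbitrary: L P e)
  case 0 then show ?case by (simp add: TL_def TP_def)
next
  case (Suc k)
  have np: "n > 0" using n_pos[OF nd mo] .
  have lt: "m * 2 ^ k < n" using Suc.prems(1) m_pos[OF nd mo] unfolding nd
    by (simp add: power_strict_increasing)
  have v: "set ((int (m * 2 ^ k), False) # L) \<subseteq> carrier (dihedral_group n)"
  proof -
    have "int (m * 2 ^ k) < int n" using lt by linarith
    then show ?thesis using Suc.prems by (auto simp: dg_carrier simp del: of_nat_mult of_nat_power)
  qed
  have l: "length (1/2 # P) = length ((int (m * 2 ^ k), False) # L)" using Suc.prems by simp
  have eq1: "TL m (Suc k) @ L = TL m k @ ((int (m * 2 ^ k), False) # L)" by (simp add: TL_def)
  have eq2: "TP (Suc k) @ P = TP k @ (1/2 # P)" unfolding TP_def by (rule rep_app)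
  note IH = Suc.IH[OF _ v l] 
  have r: "FT n ((int (m * 2 ^ k), False) # L) (1/2 # P) e w = (1 - of_real (1/2) + of_real (1/2) * w ^ (m * 2 ^ k)) * FT n L P e w"
    using FT_rot[OF np Suc.prems(2,3) _ _ assms(4), where b="int (m * 2 ^ k)" and p="1/2"] lt by (simp del: of_nat_mult of_nat_power)
  show ?case unfolding eq1 eq2 using IH[of e] Suc.prems(1) r by (simp add: mult.assoc)
qed

lemma two_pow:
  fixes q :: complex
  shows "q ^ (2 ^ s) = 1 \<Longrightarrow> q \<noteq> 1 \<Longrightarrow> \<exists>j<s. q ^ (2 ^ j) = -1"
proof (induction s)
  case 0 then show ?case by simp
next
  case (Suc s)
  show ?case
  proof (cases "q ^ (2 ^ s) = 1")
    case True then obtain j where "j < s" "q ^ (2 ^ j) = -1" using Suc by auto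
    then show ?thesis by (intro exI[of _ j]) auto
  next
    case False
    have "(q ^ (2 ^ s)) ^ 2 = 1" using Suc.prems by (simp add: power_mult[symmetric] mult.commute)
    then have "q ^ (2 ^ s) = -1" using False by (simp add: power2_eq_1_iff)
    then show ?thesis by auto
  qed
qed


lemma FT_zero:
  assumes k: "1 \<le> k" "k < n"
  shows "FT n (TL m t @ PL n t m ((m - 1) div 2)) (TP t @ PS n t m ((m - 1) div 2)) e (zeta n ^ k) = 0"
proof -
  define h where "h = (m - 1) div 2"
  define w where "w = zeta n ^ k"
  have np: "n > 0" using n_pos[OF nd mo] .
  have mp: "m > 0" using m_pos[OF nd mo] .
  have hm: "h < m" unfolding h_def using mp by simp
  have wn: "w ^ n = 1" unfolding w_def using zeta_n[OF np] by (metis power_mult mult.commute power_one)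
  have pv: "set (PL n t m h) \<subseteq> carrier (dihedral_group n)" "length (PS n t m h) = length (PL n t m h)"
    using PL_valid[OF nd mo hm] by auto
  have tot: "FT n (TL m t @ PL n t m h) (TP t @ PS n t m h) e w =
     (\<Prod>j<t. (1 - of_real (1/2) + of_real (1/2) * w ^ (m * 2 ^ j))) * FT n (PL n t m h) (PS n t m h) e w"
    using TL_FT[OF order.refl pv wn] by blast
  show ?thesis
  proof (cases "2 ^ t dvd k")
    case True
    then obtain k' where k': "k = 2 ^ t * k'" by auto
    have k1: "1 \<le> k'" using k k' by (cases k') auto
    have k2: "k' < m" using k k' unfolding nd by simp
    have z: "FT n (PL n t m h) (PS n t m h) e w = 0"
    proof (cases "k' \<le> h")
      case True
      have "Re (w ^ cc n t m (Suc (k' - 1))) = Re (wq n t (Suc (k' - 1)) ^ cc n t m (Suc (k' - 1)))"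
        using k1 unfolding w_def wq_def k' by simp
      then show ?thesis using PL_kill[of "k' - 1" h w] k1 True hm wn by simp
    next
      case False
      define k'' where "k'' = m - k'"
      have k''1: "1 \<le> k''" "Suc (k'' - 1) = k''" "k'' \<le> h" using False k2 mo unfolding k''_def h_def by (auto elim!: oddE)
      let ?c = "cc n t m k''"
      have prod1: "w * wq n t k'' = 1"
      proof -
        have "w * wq n t k'' = zeta n ^ (2 ^ t * k' + 2 ^ t * k'')" unfolding w_def wq_def k' by (simp add: power_add)
        also have "2 ^ t * k' + 2 ^ t * k'' = n" unfolding k''_def nd using k2 by (simp add: add_mult_distrib2[symmetric])
        finally show ?thesis using zeta_n[OF np] by simp
      qed
      have wqn: "norm (wq n t k'') = 1" using root_norm[OF mp wq_m[OF nd mo]] .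
      have "w ^ ?c * wq n t k'' ^ ?c = 1" using prod1 by (metis power_mult_distrib power_one)
      moreover have "wq n t k'' ^ ?c * cnj (wq n t k'' ^ ?c) = 1"
        using wqn complex_norm_square[of "wq n t k'' ^ ?c"] by (simp add: norm_power)
      ultimately have "w ^ ?c = cnj (wq n t k'' ^ ?c)"
        by (metis mult.commute mult.left_neutral mult.assoc)
      then have "Re (w ^ ?c) = Re (wq n t k'' ^ ?c)" by (metis cnj.sel(1))
      then have "Re (w ^ cc n t m (Suc (k'' - 1))) = Re (wq n t (Suc (k'' - 1)) ^ cc n t m (Suc (k'' - 1)))"
        using k''1 by simp
      then show ?thesis using PL_kill[of "k'' - 1" h w] k''1 hm wn by simp
    qed
    show ?thesis using tot z unfolding w_def h_def by simp
  next
    case False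
    define q where "q = w ^ m"
    have "q \<noteq> 1"
    proof
      assume "q = 1"
      then have "zeta n ^ (k * m) = 1" unfolding q_def w_def by (simp add: power_mult)
      then have "n dvd k * m" using zeta_pow_eq_1[OF np] by simp
      then have "2 ^ t dvd k" unfolding nd using mp by simp
      then show False using False by simp
    qed
    moreover have "q ^ (2 ^ t) = 1"
    proof -
      have "q ^ (2 ^ t) = w ^ n" unfolding q_def nd by (simp add: power_mult[symmetric] mult.commute)
      then show ?thesis using wn by simp
    qed
    ultimately obtain j where j: "j < t" "q ^ (2 ^ j) = -1" using two_pow by blast
    then have "w ^ (m * 2 ^ j) = -1" unfolding q_def by (simp add: power_mult)
    then have "(\<Prod>j<t. (1 - of_real (1/2) + of_real (1/2) * w ^ (m * 2 ^ j))) = 0"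
      using j(1) by (subst prod_zero_iff) (auto intro!: bexI[of _ j])
    then show ?thesis using tot unfolding w_def h_def by simp
  qed
qed

lemma FT_at_one:
  "FT n (TL m t @ PL n t m ((m - 1) div 2)) (TP t @ PS n t m ((m - 1) div 2)) e 1 = 1/2"
proof -
  define h where "h = (m - 1) div 2"
  have mp: "m > 0" using m_pos[OF nd mo] .
  have hm: "h < m" unfolding h_def using mp by simp
  have pv: "set (PL n t m h) \<subseteq> carrier (dihedral_group n)" "length (PS n t m h) = length (PL n t m h)"
    using PL_valid[OF nd mo hm] by auto
  show ?thesis using TL_FT[OF order.refl pv, where w=1 and e=e] PL_one[OF hm, of e] unfolding h_def by simp
qed

end


theorem mainTheorem17:
  fixes n t m :: nat
  assumes "n = 2 ^ t * m" and "odd m"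
  shows "mixlen (dihedral_group n) \<le> t + m"
proof -
  define h where "h = (m - 1) div 2"
  define gs where "gs = TL m t @ PL n t m h"
  define ps where "ps = TP t @ PS n t m h"
  let ?D = "dihedral_group n"
  have np: "n > 0" using n_pos[OF assms] .
  have mp: "m > 0" using m_pos[OF assms] .
  have hm: "h < m" unfolding h_def using mp by simp
  have pv: "set (PL n t m h) \<subseteq> carrier ?D" "length (PS n t m h) = length (PL n t m h)"
    "\<forall>p\<in>set (PS n t m h). 0 \<le> p \<and> p \<le> 1" "length (PL n t m h) = 2 * h + 1"
    using PL_valid[OF assms hm] by auto
  have tv: "set gs \<subseteq> carrier ?D" "length ps = length gs"
    using TL_FT[OF assms order.refl pv(1,2), where w=1] unfolding gs_def ps_def by auto
  have len: "length gs = t + m" unfolding gs_def using pv(4) assms(2)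
    by (auto simp: TL_def h_def elim!: oddE)
  have prange: "\<forall>p\<in>set ps. 0 \<le> p \<and> p \<le> 1" unfolding ps_def TP_def using pv(3) by auto
  have card: "card (carrier ?D) = 2 * n" by (simp add: dg_carrier card_cartesian_product)
  have unif: "subprod_prob ?D gs ps x = 1 / real (card (carrier ?D))" if x: "x \<in> carrier ?D" for x
  proof -
    obtain c e where ce: "x = (c, e)" by (cases x)
    have c: "c \<in> {0..<int n}" using x ce by (simp add: dg_carrier)
    define f where "f = (\<lambda>c. subprod_prob ?D gs ps (c, e))"
    have hk: "(\<Sum>c\<in>{0..<int n}. of_real (f c) * (zeta n ^ k) powi c) = 0" if "k \<in> {1..<n}" for k
      using FT_zero[OF assms, of k e] that unfolding FT_def f_def gs_def ps_def h_def by simp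
    have "of_real (\<Sum>c\<in>{0..<int n}. f c) = (1/2 :: complex)"
      using FT_at_one[OF assms, of e] unfolding FT_def f_def gs_def ps_def h_def by simp
    then have s: "(\<Sum>c\<in>{0..<int n}. f c) = 1/2"
      by (metis of_real_divide of_real_eq_iff of_real_numeral of_real_1)
    have "f c = (\<Sum>c\<in>{0..<int n}. f c) / real n" by (rule inversion[OF np hk c])
    then have "f c = 1 / (2 * real n)" using s by simp
    then show ?thesis unfolding ce card f_def by simp
  qed
  have "uniform_subproduct ?D gs ps"
    unfolding uniform_subproduct_def using tv prange unif by auto
  then have "\<exists>gs ps. length gs = t + m \<and> uniform_subproduct ?D gs ps" using len by blast
  then show ?thesis unfolding mixlen_def by (rule Least_le)
qed

end
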